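(* Fix $\theta\in(1/2,7/8]$, $h_1\in[0,1]$, $\alpha\in[0,1]$ and $[\underline h,\bar h]\subset(0,1)$. Assume the $J_X$ are independent with finite second moments and $\sum_X\mathrm{Var}(J_X)\le Cn$ for a constant $C$ independent of $n$, and let $C_P>0$ be a constant independent of $n,h_0,h_1,\alpha$ with $\mathbb E[(P_n(h_0,h_1,\alpha)-p_n(h_0,h_1,\alpha))^2]\le C_P/n$ for all parameters. Then for all sufficiently large $n$, $$\int_{\underline h}^{\bar h}dh_0\,\mathbb E\big[(\langle Q_1\rangle_{h_0,h_1,\alpha}-\mathbb E\langle Q_1\rangle_{h_0,h_1,\alpha})^2\big]\le\frac{5C_P+40}{n^{1/3}}.$$
   Context: Spins $\boldsymbol\sigma\in\{-1,1\}^n$, $\sigma_X=\prod_{i\in X}\sigma_i$. The couplings $J_X\ge0$, $X\subset\{1,\dots,n\}$, are independent random variables; $\tau_1,\dots,\tau_n$ are i.i.d. Poisson with mean $\alpha n^{\theta-1}$, independent of the couplings. Hamiltonian $\mathcal H(\boldsymbol\sigma)=-\sum_XJ_X\sigma_X-h_0\sum_i\sigma_i-h_1\sum_i\tau_i\sigma_i$, partition function $\mathcal Z_{h_0,h_1,\alpha}$, Gibbs expectation $\langle\cdot\rangle_{h_0,h_1,\alpha}$. $Q_1=\frac1n\sum_i\sigma_i$. Pressure $P_n=\frac1n\ln\mathcal Z_{h_0,h_1,\alpha}$, $p_n=\mathbb EP_n$ with $\mathbb E$ over all $J_X$ and $\boldsymbol\tau$. *)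

theory Defs
  imports "HOL-Probability.Probability"
begin

definition spins :: "nat \<Rightarrow> (nat \<Rightarrow> real) set" where
  "spins n = PiE {1..n} (\<lambda>_. {-1, 1})"

definition spin_prod :: "(nat \<Rightarrow> real) \<Rightarrow> nat set \<Rightarrow> real" where
  "spin_prod \<sigma> X = (\<Prod>i\<in>X. \<sigma> i)"

text \<open>Hamiltonian, given a realisation J of the couplings (indexed by the subsets
  X of {1..n}) and a realisation tau of the Poisson variables.\<close>
definition hamiltonian ::
  "nat \<Rightarrow> (nat set \<Rightarrow> real) \<Rightarrow> (nat \<Rightarrow> nat) \<Rightarrow> real \<Rightarrow> real \<Rightarrow> (nat \<Rightarrow> real) \<Rightarrow> real" where
  "hamiltonian n J \<tau> h0 h1 \<sigma> =
     - (\<Sum>X\<in>Pow {1..n}. J X * spin_prod \<sigma> X)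
     - h0 * (\<Sum>i\<in>{1..n}. \<sigma> i)
     - h1 * (\<Sum>i\<in>{1..n}. real (\<tau> i) * \<sigma> i)"

definition partition_fn ::
  "nat \<Rightarrow> (nat set \<Rightarrow> real) \<Rightarrow> (nat \<Rightarrow> nat) \<Rightarrow> real \<Rightarrow> real \<Rightarrow> real" where
  "partition_fn n J \<tau> h0 h1 = (\<Sum>\<sigma>\<in>spins n. exp (- hamiltonian n J \<tau> h0 h1 \<sigma>))"

definition gibbs ::
  "nat \<Rightarrow> (nat set \<Rightarrow> real) \<Rightarrow> (nat \<Rightarrow> nat) \<Rightarrow> real \<Rightarrow> real \<Rightarrow> ((nat \<Rightarrow> real) \<Rightarrow> real) \<Rightarrow> real" where
  "gibbs n J \<tau> h0 h1 f =
     (\<Sum>\<sigma>\<in>spins n. f \<sigma> * exp (- hamiltonian n J \<tau> h0 h1 \<sigma>)) / partition_fn n J \<tau> h0 h1"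

definition Q1 :: "nat \<Rightarrow> (nat \<Rightarrow> real) \<Rightarrow> real" where
  "Q1 n \<sigma> = (1 / real n) * (\<Sum>i\<in>{1..n}. \<sigma> i)"

definition pressure ::
  "nat \<Rightarrow> (nat set \<Rightarrow> real) \<Rightarrow> (nat \<Rightarrow> nat) \<Rightarrow> real \<Rightarrow> real \<Rightarrow> real" where
  "pressure n J \<tau> h0 h1 = ln (partition_fn n J \<tau> h0 h1) / real n"

definition poisson_law :: "real \<Rightarrow> nat pmf" where
  "poisson_law r = (if 0 < r then poisson_pmf r else return_pmf 0)"

definition disorder_law ::
  "(nat \<Rightarrow> nat set \<Rightarrow> real measure) \<Rightarrow> real \<Rightarrow> nat \<Rightarrow> real
     \<Rightarrow> ((nat set \<Rightarrow> real) \<times> (nat \<Rightarrow> nat)) measure" where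
  "disorder_law \<mu> \<theta> n \<alpha> =
     (PiM (Pow {1..n}) (\<lambda>X. \<mu> n X)) \<Otimes>\<^sub>M
     (PiM {1..n} (\<lambda>i. measure_pmf (poisson_law (\<alpha> * real n powr (\<theta> - 1)))))"

definition law_var :: "real measure \<Rightarrow> real" where
  "law_var m = (\<integral>x. x\<^sup>2 \<partial>m) - (\<integral>x. x \<partial>m)\<^sup>2"

end

theory Submission
  imports Defs "HOL-Real_Asymp.Real_Asymp"
begin


lemma lse_tangent:
  fixes w f :: "'a \<Rightarrow> real"
  assumes S: "finite S" "S \<noteq> {}" and w: "\<And>s. s \<in> S \<Longrightarrow> 0 < w s"
  shows "ln (sum w S) + (\<Sum>s\<in>S. f s * w s) / sum w S \<le> ln (\<Sum>s\<in>S. w s * exp (f s))"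
proof -
  define W where "W = sum w S"
  define q where "q = (\<Sum>s\<in>S. f s * w s) / W"
  have Wpos: "W > 0" unfolding W_def using S w by (intro sum_pos) auto
  have "\<And>s. s \<in> S \<Longrightarrow> w s * (exp q * (1 + (f s - q))) \<le> w s * exp (f s)"
  proof -
    fix s assume s: "s \<in> S"
    have "exp q * (1 + (f s - q)) \<le> exp q * exp (f s - q)"
      by (intro mult_left_mono exp_ge_add_one_self) auto
    also have "\<dots> = exp (f s)" by (simp add: exp_diff)
    finally show "w s * (exp q * (1 + (f s - q))) \<le> w s * exp (f s)"
      using w[OF s] by (intro mult_left_mono) auto
  qed
  hence "(\<Sum>s\<in>S. w s * (exp q * (1 + (f s - q)))) \<le> (\<Sum>s\<in>S. w s * exp (f s))"
    by (intro sum_mono) auto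
  moreover have "(\<Sum>s\<in>S. w s * (exp q * (1 + (f s - q)))) = exp q * (W + (\<Sum>s\<in>S. f s * w s) - q * W)"
    by (simp add: W_def algebra_simps sum.distrib sum_subtractf sum_distrib_left sum_distrib_right)
  moreover have "(\<Sum>s\<in>S. f s * w s) - q * W = 0" using Wpos by (simp add: q_def)
  ultimately have le: "exp q * W \<le> (\<Sum>s\<in>S. w s * exp (f s))" by simp
  have "ln (exp q * W) \<le> ln (\<Sum>s\<in>S. w s * exp (f s))"
    using le Wpos by (subst ln_le_cancel_iff) (auto intro: less_le_trans[OF _ le])
  thus ?thesis using Wpos by (simp add: ln_mult W_def q_def)
qed

lemma spins_finite: "finite (spins n)"
  unfolding spins_def by (intro finite_PiE) auto

lemma spins_card: "card (spins n) = 2 ^ n"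
  unfolding spins_def by (simp add: card_PiE numeral_2_eq_2)

lemma spins_ne: "spins n \<noteq> {}"
  unfolding spins_def by (simp add: PiE_eq_empty_iff)

lemma spins_val: "\<sigma> \<in> spins n \<Longrightarrow> i \<in> {1..n} \<Longrightarrow> \<bar>\<sigma> i\<bar> = 1"
  unfolding spins_def by (force simp: PiE_iff)

lemma Z_pos: "0 < partition_fn n J \<tau> h0 h1"
  unfolding partition_fn_def using spins_finite spins_ne by (intro sum_pos) auto

lemma ham_shift: "- hamiltonian n J \<tau> (h + d) h1 \<sigma> = - hamiltonian n J \<tau> h h1 \<sigma> + d * (\<Sum>i\<in>{1..n}. \<sigma> i)"
  unfolding hamiltonian_def by (simp add: algebra_simps)

lemma Q1_sum: "n \<ge> 1 \<Longrightarrow> real n * Q1 n \<sigma> = (\<Sum>i\<in>{1..n}. \<sigma> i)"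
  unfolding Q1_def by simp

lemma pressure_tangent:
  assumes n: "n \<ge> 1"
  shows "d * gibbs n J \<tau> h h1 (Q1 n) \<le> pressure n J \<tau> (h + d) h1 - pressure n J \<tau> h h1"
proof -
  let ?w = "\<lambda>\<sigma>. exp (- hamiltonian n J \<tau> h h1 \<sigma>)"
  let ?f = "\<lambda>\<sigma>. d * real n * Q1 n \<sigma>"
  have Zs: "partition_fn n J \<tau> (h + d) h1 = (\<Sum>\<sigma>\<in>spins n. ?w \<sigma> * exp (?f \<sigma>))"
    unfolding partition_fn_def ham_shift using n
    by (intro sum.cong refl) (simp add: mult_exp_exp Q1_sum mult.assoc algebra_simps)
  have Z: "partition_fn n J \<tau> h h1 = sum ?w (spins n)" unfolding partition_fn_def ..
  have "ln (sum ?w (spins n)) + (\<Sum>\<sigma>\<in>spins n. ?f \<sigma> * ?w \<sigma>) / sum ?w (spins n)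
     \<le> ln (\<Sum>\<sigma>\<in>spins n. ?w \<sigma> * exp (?f \<sigma>))"
    by (rule lse_tangent[OF spins_finite spins_ne]) auto
  moreover have "(\<Sum>\<sigma>\<in>spins n. ?f \<sigma> * ?w \<sigma>) / sum ?w (spins n) = d * real n * gibbs n J \<tau> h h1 (Q1 n)"
    unfolding gibbs_def Z[symmetric] by (simp add: sum_distrib_left mult.assoc)
  ultimately have "ln (partition_fn n J \<tau> h h1) + d * real n * gibbs n J \<tau> h h1 (Q1 n)
      \<le> ln (partition_fn n J \<tau> (h + d) h1)" using Zs Z by simp
  moreover have "(pressure n J \<tau> (h + d) h1 - pressure n J \<tau> h h1) * real n
     = ln (partition_fn n J \<tau> (h + d) h1) - ln (partition_fn n J \<tau> h h1)"
    using n unfolding pressure_def by (simp add: diff_divide_distrib[symmetric])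
  ultimately have "(d * gibbs n J \<tau> h h1 (Q1 n)) * real n \<le> (pressure n J \<tau> (h + d) h1 - pressure n J \<tau> h h1) * real n"
    by (simp add: algebra_simps)
  thus ?thesis using n by (simp add: mult_le_cancel_right)
qed

lemma Q1_bound: "\<sigma> \<in> spins n \<Longrightarrow> \<bar>Q1 n \<sigma>\<bar> \<le> 1"
proof -
  assume s: "\<sigma> \<in> spins n"
  have "\<bar>\<Sum>i\<in>{1..n}. \<sigma> i\<bar> \<le> (\<Sum>i\<in>{1..n}. \<bar>\<sigma> i\<bar>)" by (rule sum_abs)
  also have "\<dots> = real n" using spins_val[OF s] by simp
  finally show ?thesis unfolding Q1_def by (cases "n = 0") (auto simp: abs_mult field_simps)
qed

lemma gibbs_bound: "\<bar>gibbs n J \<tau> h h1 (Q1 n)\<bar> \<le> 1"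
proof -
  let ?w = "\<lambda>\<sigma>. exp (- hamiltonian n J \<tau> h h1 \<sigma>)"
  have "\<bar>\<Sum>\<sigma>\<in>spins n. Q1 n \<sigma> * ?w \<sigma>\<bar> \<le> (\<Sum>\<sigma>\<in>spins n. \<bar>Q1 n \<sigma> * ?w \<sigma>\<bar>)" by (rule sum_abs)
  also have "\<dots> \<le> (\<Sum>\<sigma>\<in>spins n. ?w \<sigma>)"
    by (intro sum_mono) (auto simp: abs_mult intro!: mult_right_le_one_le Q1_bound)
  finally show ?thesis using Z_pos[of n J \<tau> h h1]
    unfolding gibbs_def partition_fn_def by (simp add: abs_div divide_le_eq_1)
qed

definition Kb :: "nat \<Rightarrow> (nat set \<Rightarrow> real) \<Rightarrow> (nat \<Rightarrow> nat) \<Rightarrow> real \<Rightarrow> real \<Rightarrow> real" where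
  "Kb n J \<tau> h h1 = (\<Sum>X\<in>Pow {1..n}. \<bar>J X\<bar>) + real n * \<bar>h\<bar> + h1 * (\<Sum>i\<in>{1..n}. real (\<tau> i))"

lemma spin_prod_bound: "\<sigma> \<in> spins n \<Longrightarrow> X \<in> Pow {1..n} \<Longrightarrow> \<bar>spin_prod \<sigma> X\<bar> \<le> 1"
  unfolding spin_prod_def abs_prod
  by (intro prod_le_1) (auto intro!: eq_refl dest!: spins_val dest: subsetD)

lemma ham_bound:
  assumes s: "\<sigma> \<in> spins n" and h1: "0 \<le> h1"
  shows "\<bar>hamiltonian n J \<tau> h h1 \<sigma>\<bar> \<le> Kb n J \<tau> h h1"
proof -
  have a: "\<bar>\<Sum>X\<in>Pow {1..n}. J X * spin_prod \<sigma> X\<bar> \<le> (\<Sum>X\<in>Pow {1..n}. \<bar>J X\<bar>)"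
    by (rule order.trans[OF sum_abs], intro sum_mono)
       (auto simp: abs_mult intro!: mult_right_le_one_le spin_prod_bound[OF s])
  have b: "\<bar>\<Sum>i\<in>{1..n}. \<sigma> i\<bar> \<le> real n"
    by (rule order.trans[OF sum_abs]) (simp add: spins_val[OF s])
  have c: "\<bar>\<Sum>i\<in>{1..n}. real (\<tau> i) * \<sigma> i\<bar> \<le> (\<Sum>i\<in>{1..n}. real (\<tau> i))"
    by (rule order.trans[OF sum_abs]) (simp add: abs_mult spins_val[OF s])
  have b': "\<bar>h * (\<Sum>i\<in>{1..n}. \<sigma> i)\<bar> \<le> real n * \<bar>h\<bar>"
    using b by (simp add: abs_mult mult_left_mono mult.commute)
  have c': "\<bar>h1 * (\<Sum>i\<in>{1..n}. real (\<tau> i) * \<sigma> i)\<bar> \<le> h1 * (\<Sum>i\<in>{1..n}. real (\<tau> i))"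
    using c h1 by (simp add: abs_mult mult_left_mono)
  show ?thesis unfolding hamiltonian_def Kb_def using a b' c' by linarith
qed

lemma pressure_bound:
  assumes n: "n \<ge> 1" and h1: "0 \<le> h1"
  shows "\<bar>pressure n J \<tau> h h1\<bar> \<le> ln 2 + Kb n J \<tau> h h1 / real n"
proof -
  let ?K = "Kb n J \<tau> h h1"
  let ?Z = "partition_fn n J \<tau> h h1"
  obtain \<sigma>0 where s0: "\<sigma>0 \<in> spins n" using spins_ne by blast
  have "exp (- ?K) \<le> exp (- hamiltonian n J \<tau> h h1 \<sigma>0)"
    using ham_bound[OF s0 h1, of J \<tau> h] by simp
  also have "\<dots> \<le> ?Z" unfolding partition_fn_def
    by (rule member_le_sum[OF s0]) (auto simp: spins_finite)
  finally have lo: "- ?K \<le> ln ?Z" using Z_pos[of n J \<tau> h h1]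
    by (metis exp_gt_zero ln_exp ln_le_cancel_iff)
  have "?Z \<le> real (card (spins n)) * exp ?K" unfolding partition_fn_def
  proof (rule sum_bounded_above)
    fix \<sigma> assume "\<sigma> \<in> spins n"
    hence "\<bar>hamiltonian n J \<tau> h h1 \<sigma>\<bar> \<le> ?K" by (rule ham_bound[OF _ h1])
    thus "exp (- hamiltonian n J \<tau> h h1 \<sigma>) \<le> exp ?K" by simp
  qed
  also have "\<dots> = 2 ^ n * exp ?K" by (simp add: spins_card)
  finally have "ln ?Z \<le> ln (2 ^ n * exp ?K)" using Z_pos[of n J \<tau> h h1] by simp
  also have "\<dots> = real n * ln 2 + ?K" by (simp add: ln_mult ln_realpow)
  finally have up: "ln ?Z \<le> real n * ln 2 + ?K" .
  have K0: "0 \<le> ?K" using ham_bound[OF s0 h1, of J \<tau> h] by linarith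
  have "\<bar>ln ?Z\<bar> \<le> real n * ln 2 + ?K" using lo up K0 by (simp add: abs_le_iff add_increasing)
  hence "\<bar>ln ?Z\<bar> / real n \<le> (real n * ln 2 + ?K) / real n" using n by (intro divide_right_mono) auto
  thus ?thesis using n unfolding pressure_def by (simp add: abs_div add_divide_distrib)
qed



lemma distr_pair_snd':
  assumes A: "prob_space A" and B: "prob_space B"
  shows "distr (A \<Otimes>\<^sub>M B) B snd = B"
proof (intro measure_eqI)
  interpret B: prob_space B by (rule B)
  interpret A: prob_space A by (rule A)
  fix S assume S: "S \<in> sets (distr (A \<Otimes>\<^sub>M B) B snd)"
  from S have "emeasure (distr (A \<Otimes>\<^sub>M B) B snd) S = emeasure (A \<Otimes>\<^sub>M B) (space A \<times> S)"
    by (auto simp add: emeasure_distr space_pair_measure dest: sets.sets_into_space intro!: arg_cong2[where f=emeasure])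
  with S show "emeasure (distr (A \<Otimes>\<^sub>M B) B snd) S = emeasure B S"
    by (simp add: B.emeasure_pair_measure_Times A.emeasure_space_1)
qed simp

lemma nat_sq_le: "real k ^ 2 \<le> 4 ^ k"
proof -
  have "real k \<le> 2 ^ k" using less_exp[of k] by (metis of_nat_le_iff of_nat_numeral of_nat_power less_imp_le)
  hence "real k ^ 2 \<le> (2 ^ k) ^ 2" by (intro power_mono) auto
  also have "\<dots> = ((2::real) ^ 2) ^ k" by (metis power_mult mult.commute)
  also have "\<dots> = 4 ^ k" by simp
  finally show ?thesis .
qed

lemma poisson_term_le:
  assumes r: "0 < r"
  shows "norm (norm (pmf (poisson_pmf r) k * (real k)\<^sup>2)) \<le> exp (- r) * ((4 * r) ^ k / fact k)"
proof -
  have "r ^ k * real k ^ 2 \<le> r ^ k * 4 ^ k" using r nat_sq_le[of k] by (intro mult_left_mono) auto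
  hence "r ^ k * real k ^ 2 / fact k \<le> (4 * r) ^ k / fact k"
    by (intro divide_right_mono) (auto simp: power_mult_distrib mult.commute)
  hence "exp (- r) * (r ^ k * real k ^ 2 / fact k) \<le> exp (- r) * ((4 * r) ^ k / fact k)"
    by (intro mult_left_mono) auto
  moreover have "norm (norm (pmf (poisson_pmf r) k * (real k)\<^sup>2)) = exp (- r) * (r ^ k * real k ^ 2 / fact k)"
  proof -
    have "0 \<le> pmf (poisson_pmf r) k * (real k)\<^sup>2" by simp
    hence "norm (norm (pmf (poisson_pmf r) k * (real k)\<^sup>2)) = pmf (poisson_pmf r) k * (real k)\<^sup>2"
      by simp
    also have "\<dots> = exp (- r) * (r ^ k * real k ^ 2 / fact k)" using r by simp
    finally show ?thesis .
  qed
  ultimately show ?thesis by linarith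
qed

lemma poisson_sq: "integrable (measure_pmf (poisson_law r)) (\<lambda>k. (real k)\<^sup>2)"
proof (cases "0 < r")
  case False
  thus ?thesis unfolding poisson_law_def by (auto intro: integrable_measure_pmf_finite)
next
  case True
  have sum4: "summable (\<lambda>k. (4 * r) ^ k / fact k)"
    using summable_exp[of "4 * r"] by (simp add: divide_inverse mult.commute)
  have "summable (\<lambda>k. norm (pmf (poisson_pmf r) k * (real k)\<^sup>2))"
    by (rule summable_comparison_test[OF _ summable_mult[OF sum4, of "exp (-r)"]])
       (use poisson_term_le[OF True] in blast)
  hence "integrable (count_space UNIV) (\<lambda>k. pmf (poisson_pmf r) k *\<^sub>R (real k)\<^sup>2)"
    by (simp add: integrable_count_space_nat_iff)
  hence "integrable (density (count_space UNIV) (pmf (poisson_pmf r))) (\<lambda>k. (real k)\<^sup>2)"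
    by (subst integrable_density) auto
  thus ?thesis using True unfolding poisson_law_def by (simp add: measure_pmf_eq_density)
qed

definition sqi :: "'a measure \<Rightarrow> ('a \<Rightarrow> real) \<Rightarrow> bool" where
  "sqi N f \<longleftrightarrow> f \<in> borel_measurable N \<and> integrable N (\<lambda>x. (f x)\<^sup>2)"

lemma sq_sum_le: "((a::real) + b)\<^sup>2 \<le> 2 * a\<^sup>2 + 2 * b\<^sup>2"
proof -
  have "0 \<le> (a - b)\<^sup>2" by simp
  thus ?thesis by (simp add: power2_eq_square algebra_simps)
qed

lemma sqi_add:
  assumes "sqi N f" "sqi N g" shows "sqi N (\<lambda>x. f x + g x)"
proof -
  have fm: "f \<in> borel_measurable N" and gm: "g \<in> borel_measurable N" using assms by (auto simp: sqi_def)
  have i2: "integrable N (\<lambda>x. 2 * (f x)\<^sup>2 + 2 * (g x)\<^sup>2)" using assms unfolding sqi_def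
    by (intro Bochner_Integration.integrable_add integrable_mult_right) auto
  have m: "(\<lambda>x. (f x + g x)\<^sup>2) \<in> borel_measurable N" using fm gm by measurable
  have "integrable N (\<lambda>x. (f x + g x)\<^sup>2)"
  proof (rule Bochner_Integration.integrable_bound[OF i2 m], rule AE_I2)
    fix x
    have "0 \<le> 2 * (f x)\<^sup>2 + 2 * (g x)\<^sup>2" by simp
    thus "norm ((f x + g x)\<^sup>2) \<le> norm (2 * (f x)\<^sup>2 + 2 * (g x)\<^sup>2)"
      using sq_sum_le[of "f x" "g x"] by simp
  qed
  thus ?thesis using fm gm by (simp add: sqi_def)
qed

lemma sqi_cmult: "sqi N f \<Longrightarrow> sqi N (\<lambda>x. c * f x)"
  unfolding sqi_def power_mult_distrib by (auto intro: integrable_mult_right)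

lemma sqi_const: "finite_measure N \<Longrightarrow> sqi N (\<lambda>x. c)"
  unfolding sqi_def by (auto intro: finite_measure.integrable_const)

lemma sqi_sum: assumes fm: "finite_measure N"
  shows "finite I \<Longrightarrow> (\<And>i. i \<in> I \<Longrightarrow> sqi N (f i)) \<Longrightarrow> sqi N (\<lambda>x. \<Sum>i\<in>I. f i x)"
proof (induction I rule: finite_induct)
  case empty thus ?case using sqi_const[OF fm, of 0] by simp
next
  case (insert a I)
  have "sqi N (\<lambda>x. f a x + (\<Sum>i\<in>I. f i x))" using insert by (intro sqi_add) auto
  thus ?case using insert by simp
qed

lemma sqi_bound:
  assumes "sqi N f" "g \<in> borel_measurable N" "\<And>x. x \<in> space N \<Longrightarrow> \<bar>g x\<bar> \<le> f x"
  shows "sqi N g"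
proof -
  have fi: "integrable N (\<lambda>x. (f x)\<^sup>2)" using assms by (simp add: sqi_def)
  have gm: "(\<lambda>x. (g x)\<^sup>2) \<in> borel_measurable N" using assms(2) by measurable
  have "integrable N (\<lambda>x. (g x)\<^sup>2)"
  proof (rule Bochner_Integration.integrable_bound[OF fi gm], rule AE_I2)
    fix x assume x: "x \<in> space N"
    have "\<bar>g x\<bar> ^ 2 \<le> (f x) ^ 2" using assms(3)[OF x] by (intro power_mono) auto
    thus "norm ((g x)\<^sup>2) \<le> norm ((f x)\<^sup>2)" by simp
  qed
  thus ?thesis using assms by (simp add: sqi_def)
qed

lemma sqi_int: "finite_measure N \<Longrightarrow> sqi N f \<Longrightarrow> integrable N f"
  unfolding sqi_def by (auto intro: finite_measure.square_integrable_imp_integrable)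

locale dis =
  fixes \<mu> :: "nat set \<Rightarrow> real measure" and n :: nat and r :: real
  assumes mprob: "\<And>X. X \<in> Pow {1..n} \<Longrightarrow> prob_space (\<mu> X)"
    and msets: "\<And>X. X \<in> Pow {1..n} \<Longrightarrow> sets (\<mu> X) = sets borel"
    and mL2: "\<And>X. X \<in> Pow {1..n} \<Longrightarrow> integrable (\<mu> X) (\<lambda>x. x\<^sup>2)"
begin

abbreviation "MJ \<equiv> PiM (Pow {1..n}) \<mu>"
abbreviation "MT \<equiv> PiM {1..n} (\<lambda>i. measure_pmf (poisson_law r))"
abbreviation "M \<equiv> MJ \<Otimes>\<^sub>M MT"

lemma measJ: "X \<in> Pow {1..n} \<Longrightarrow> (\<lambda>\<omega>. fst \<omega> X) \<in> borel_measurable M"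
proof -
  assume X: "X \<in> Pow {1..n}"
  have "(\<lambda>\<omega>. \<omega> X) \<in> measurable MJ (\<mu> X)" using X by (rule measurable_component_singleton)
  hence "(\<lambda>\<omega>. \<omega> X) \<in> borel_measurable MJ" using msets[OF X] by (simp add: measurable_def space_borel)
  thus ?thesis by measurable
qed

lemma measT: "(\<lambda>\<omega>. real (snd \<omega> i)) \<in> borel_measurable M"
proof (cases "i \<in> {1..n}")
  case True
  have "(\<lambda>\<omega>. \<omega> i) \<in> measurable MT (measure_pmf (poisson_law r))" using True by (rule measurable_component_singleton)
  hence "(\<lambda>\<omega>. real (\<omega> i)) \<in> borel_measurable MT" by (rule measurable_compose) simp
  thus ?thesis by measurable
next
  case False
  hence "\<And>\<omega>. \<omega> \<in> space M \<Longrightarrow> snd \<omega> i = undefined" by (auto simp: space_pair_measure space_PiM PiE_def extensional_def)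
  thus ?thesis by (subst measurable_cong[where g="\<lambda>_. real undefined"]) auto
qed

lemma measH: "(\<lambda>\<omega>. hamiltonian n (fst \<omega>) (snd \<omega>) h h1 \<sigma>) \<in> borel_measurable M"
  unfolding hamiltonian_def using measJ measT by measurable

lemma probM: "prob_space M"
  by (intro prob_space_pair prob_space_PiM mprob measure_pmf.prob_space_axioms) auto

lemma intJ:
  fixes g :: "real \<Rightarrow> real"
  assumes X: "X \<in> Pow {1..n}" and g: "integrable (\<mu> X) g"
  shows "integrable M (\<lambda>\<omega>. g (fst \<omega> X))"
proof -
  have gm: "g \<in> borel_measurable (\<mu> X)" using g by auto
  have "integrable (distr MJ (\<mu> X) (\<lambda>x. x X)) g"
    using g by (subst distr_PiM_component[OF mprob X]) auto
  hence i1: "integrable MJ (\<lambda>x. g (x X))"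
    using integrable_distr_eq[where g="\<lambda>x. x X" and M=MJ and N="\<mu> X" and f=g] measurable_component_singleton[where M=\<mu>, OF X] gm by blast
  interpret T: prob_space MT by (intro prob_space_PiM measure_pmf.prob_space_axioms)
  have "integrable (distr M MJ fst) (\<lambda>x. g (x X))" by (subst T.distr_pair_fst) (rule i1)
  thus ?thesis using i1 by (intro integrable_distr_eq[THEN iffD1, OF measurable_fst]) auto
qed

lemma intT:
  fixes g :: "nat \<Rightarrow> real"
  assumes i: "i \<in> {1..n}" and g: "integrable (measure_pmf (poisson_law r)) g"
  shows "integrable M (\<lambda>\<omega>. g (snd \<omega> i))"
proof -
  have "integrable (distr MT (measure_pmf (poisson_law r)) (\<lambda>x. x i)) g"
    using g by (subst distr_PiM_component[OF _ i]) (auto intro: measure_pmf.prob_space_axioms)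
  have gm: "g \<in> borel_measurable (measure_pmf (poisson_law r))" by simp
  hence i1: "integrable MT (\<lambda>x. g (x i))"
    using \<open>integrable (distr MT _ _) g\<close>
    using integrable_distr_eq[where g="\<lambda>x. x i" and M=MT and N="measure_pmf (poisson_law r)" and f=g] measurable_component_singleton[where M="\<lambda>i. measure_pmf (poisson_law r)", OF i] gm by blast
  have "integrable (distr M MT snd) (\<lambda>x. g (x i))" using i1
    by (subst distr_pair_snd') (auto intro!: prob_space_PiM mprob measure_pmf.prob_space_axioms)
  thus ?thesis using i1 by (intro integrable_distr_eq[THEN iffD1, OF measurable_snd]) auto
qed

lemma finM: "finite_measure M" using probM by (simp add: prob_space_def)

lemma measE: "(\<lambda>\<omega>. exp (- hamiltonian n (fst \<omega>) (snd \<omega>) h h1 \<sigma>)) \<in> borel_measurable M"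
  by (rule measurable_compose[OF borel_measurable_uminus[OF measH] borel_measurable_exp])

lemma measZ: "(\<lambda>\<omega>. partition_fn n (fst \<omega>) (snd \<omega>) h h1) \<in> borel_measurable M"
  unfolding partition_fn_def by (rule borel_measurable_sum) (rule measE)

lemma measP: "(\<lambda>\<omega>. pressure n (fst \<omega>) (snd \<omega>) h h1) \<in> borel_measurable M"
  unfolding pressure_def
  by (rule borel_measurable_divide[OF borel_measurable_ln[OF measZ] borel_measurable_const])

lemma measG: "(\<lambda>\<omega>. gibbs n (fst \<omega>) (snd \<omega>) h h1 (Q1 n)) \<in> borel_measurable M"
  unfolding gibbs_def
  by (rule borel_measurable_divide[OF borel_measurable_sum measZ])
     (rule borel_measurable_times[OF borel_measurable_const measE])

lemma sqiK: "sqi M (\<lambda>\<omega>. Kb n (fst \<omega>) (snd \<omega>) h h1)"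
proof -
  have a: "sqi M (\<lambda>\<omega>. \<bar>fst \<omega> X\<bar>)" if X: "X \<in> Pow {1..n}" for X
    using measJ[OF X] intJ[OF X mL2[OF X]] by (simp add: sqi_def)
  have b: "sqi M (\<lambda>\<omega>. real (snd \<omega> i))" if i: "i \<in> {1..n}" for i
    using measT[of i] intT[OF i poisson_sq] by (simp add: sqi_def)
  show ?thesis unfolding Kb_def
    by (intro sqi_add sqi_cmult sqi_sum sqi_const finM a b) auto
qed

lemma sqiP: assumes "n \<ge> 1" "0 \<le> h1" shows "sqi M (\<lambda>\<omega>. pressure n (fst \<omega>) (snd \<omega>) h h1)"
  by (rule sqi_bound[OF sqi_add[OF sqi_const[OF finM] sqi_cmult[OF sqiK]] measP])
     (use pressure_bound[OF assms] in \<open>simp add: divide_inverse mult.commute\<close>)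

lemma intP: assumes "n \<ge> 1" "0 \<le> h1" shows "integrable M (\<lambda>\<omega>. pressure n (fst \<omega>) (snd \<omega>) h h1)"
  by (rule sqi_int[OF finM sqiP[OF assms]])

lemma intG: "integrable M (\<lambda>\<omega>. gibbs n (fst \<omega>) (snd \<omega>) h h1 (Q1 n))"
  by (rule finite_measure.integrable_const_bound[OF finM _ measG, where B=1]) (auto simp: gibbs_bound)

end


lemma key_real:
  fixes y a1 a0 am Dp Dm d :: real
  assumes d: "0 < d" and up: "y \<le> (a1 - a0) / d + Dp" and lo: "(a0 - am) / d - Dm \<le> y"
    and Dp: "0 \<le> Dp" "Dp \<le> 2" and Dm: "0 \<le> Dm" "Dm \<le> 2"
  shows "y\<^sup>2 \<le> 4 * (a1\<^sup>2 + 2 * a0\<^sup>2 + am\<^sup>2) / d\<^sup>2 + 4 * (Dp + Dm)"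
proof -
  have u: "((a1 - a0) / d + Dp)\<^sup>2 \<le> 4 * (a1\<^sup>2 + a0\<^sup>2) / d\<^sup>2 + 4 * Dp"
  proof -
    have "((a1 - a0) / d + Dp)\<^sup>2 \<le> 2 * ((a1 - a0) / d)\<^sup>2 + 2 * Dp\<^sup>2" by (rule sq_sum_le)
    also have "((a1 - a0) / d)\<^sup>2 = (a1 + (- a0))\<^sup>2 / d\<^sup>2" by (simp add: power_divide)
    also have "(a1 + (- a0))\<^sup>2 \<le> 2 * a1\<^sup>2 + 2 * a0\<^sup>2" using sq_sum_le[of a1 "-a0"] by simp
    also have "Dp\<^sup>2 \<le> 2 * Dp" using Dp by (simp add: power2_eq_square mult_right_mono)
    finally show ?thesis using d by (simp add: divide_right_mono add_divide_distrib)
  qed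
  have l: "((a0 - am) / d - Dm)\<^sup>2 \<le> 4 * (a0\<^sup>2 + am\<^sup>2) / d\<^sup>2 + 4 * Dm"
  proof -
    have "((a0 - am) / d + (- Dm))\<^sup>2 \<le> 2 * ((a0 - am) / d)\<^sup>2 + 2 * (- Dm)\<^sup>2" by (rule sq_sum_le)
    also have "((a0 - am) / d)\<^sup>2 = (a0 + (- am))\<^sup>2 / d\<^sup>2" by (simp add: power_divide)
    also have "(a0 + (- am))\<^sup>2 \<le> 2 * a0\<^sup>2 + 2 * am\<^sup>2" using sq_sum_le[of a0 "-am"] by simp
    also have "(- Dm)\<^sup>2 \<le> 2 * Dm" using Dm by (simp add: power2_eq_square mult_right_mono)
    finally show ?thesis using d by (simp add: divide_right_mono add_divide_distrib)
  qed
  have "y\<^sup>2 \<le> ((a1 - a0) / d + Dp)\<^sup>2 + ((a0 - am) / d - Dm)\<^sup>2"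
  proof (cases "0 \<le> y")
    case True
    hence "y\<^sup>2 \<le> ((a1 - a0) / d + Dp)\<^sup>2" using up by (intro power_mono) auto
    thus ?thesis by (smt (verit) zero_le_power2)
  next
    case False
    hence "(- y)\<^sup>2 \<le> (- ((a0 - am) / d - Dm))\<^sup>2" using lo by (intro power_mono) auto
    thus ?thesis by (smt (verit) zero_le_power2 power2_minus)
  qed
  also have "\<dots> \<le> 4 * (a1\<^sup>2 + 2 * a0\<^sup>2 + am\<^sup>2) / d\<^sup>2 + 4 * (Dp + Dm)"
  proof -
    have "4 * (a1\<^sup>2 + 2 * a0\<^sup>2 + am\<^sup>2) / d\<^sup>2 = 4 * (a1\<^sup>2 + a0\<^sup>2) / d\<^sup>2 + 4 * (a0\<^sup>2 + am\<^sup>2) / d\<^sup>2"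
      by (simp add: add_divide_distrib[symmetric] algebra_simps)
    hence eq: "4 * (a1\<^sup>2 + 2 * a0\<^sup>2 + am\<^sup>2) / d\<^sup>2 + 4 * (Dp + Dm) = (4 * (a1\<^sup>2 + a0\<^sup>2) / d\<^sup>2 + 4 * Dp) + (4 * (a0\<^sup>2 + am\<^sup>2) / d\<^sup>2 + 4 * Dm)"
      by simp
    show ?thesis unfolding eq by (rule add_mono[OF u l])
  qed
  finally show ?thesis .
qed

locale dis2 = dis +
  fixes h1 :: real
  assumes n1: "n \<ge> 1" and h1nn: "0 \<le> h1"
begin

definition "PP h \<omega> = pressure n (fst \<omega>) (snd \<omega>) h h1"
definition "GG h \<omega> = gibbs n (fst \<omega>) (snd \<omega>) h h1 (Q1 n)"
definition "mm h = (\<integral>\<omega>. GG h \<omega> \<partial>M)"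
definition "pp h = (\<integral>\<omega>. PP h \<omega> \<partial>M)"

lemma tang: "d * GG h \<omega> \<le> PP (h + d) \<omega> - PP h \<omega>"
  unfolding PP_def GG_def by (rule pressure_tangent[OF n1])

lemma intPP: "integrable M (PP h)"
  using intP[OF n1 h1nn] unfolding PP_def by simp

lemma intGG: "integrable M (GG h)"
  using intG unfolding GG_def by simp

lemma GG_le: "\<bar>GG h \<omega>\<bar> \<le> 1"
  unfolding GG_def by (rule gibbs_bound)

lemma sqiX: "sqi M (\<lambda>\<omega>. PP h \<omega> - pp h)"
  using sqi_add[OF sqiP[OF n1 h1nn, of h] sqi_const[OF finM, of "- pp h"]] unfolding PP_def by simp

lemma intX2: "integrable M (\<lambda>\<omega>. (PP h \<omega> - pp h)\<^sup>2)"
  using sqiX by (simp add: sqi_def)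

lemma measGG: "GG h \<in> borel_measurable M"
  using measG unfolding GG_def by simp

lemma intD: "integrable M (\<lambda>\<omega>. PP a \<omega> - PP b \<omega>)"
  by (intro Bochner_Integration.integrable_diff intPP)

lemma intdG: "integrable M (\<lambda>\<omega>. d * GG h \<omega>)"
  by (intro integrable_mult_right intGG)

lemma intC: "integrable M (\<lambda>\<omega>. c::real)"
  by (rule finite_measure.integrable_const[OF finM])

lemma GG_mono: assumes "h \<le> h'" shows "GG h \<omega> \<le> GG h' \<omega>"
proof (cases "h = h'")
  case False
  define d where "d = h' - h"
  have d: "0 < d" using assms False by (simp add: d_def)
  have "d * GG h \<omega> \<le> PP h' \<omega> - PP h \<omega>" using tang[of d h \<omega>] by (simp add: d_def)
  moreover have "- d * GG h' \<omega> \<le> PP h \<omega> - PP h' \<omega>" using tang[of "-d" h' \<omega>] by (simp add: d_def)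
  ultimately have "d * GG h \<omega> \<le> d * GG h' \<omega>" by simp
  thus ?thesis using d by simp
qed simp

lemma mm_mono: "h \<le> h' \<Longrightarrow> mm h \<le> mm h'"
  unfolding mm_def by (intro integral_mono intGG GG_mono)

lemma mm_le: "\<bar>mm h\<bar> \<le> 1"
proof -
  interpret P: prob_space M by (rule probM)
  have "mm h \<le> (\<integral>\<omega>. 1 \<partial>M)" unfolding mm_def
    by (rule integral_mono[OF intGG intC]) (auto intro: order.trans[OF abs_ge_self GG_le])
  moreover have "(\<integral>\<omega>. -1 \<partial>M) \<le> mm h" unfolding mm_def
  proof (rule integral_mono[OF intC intGG])
    fix \<omega> show "-1 \<le> GG h \<omega>" using GG_le[of h \<omega>] by (simp add: abs_le_iff)
  qed
  ultimately show ?thesis using P.prob_space by (simp add: abs_le_iff)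
qed

lemma pp_up: "pp (h + d) - pp h \<le> d * mm (h + d)"
proof -
  have "pp (h + d) - pp h = (\<integral>\<omega>. PP (h + d) \<omega> - PP h \<omega> \<partial>M)"
    unfolding pp_def by (rule Bochner_Integration.integral_diff[OF intPP intPP, symmetric])
  also have "\<dots> \<le> (\<integral>\<omega>. d * GG (h + d) \<omega> \<partial>M)"
  proof (rule integral_mono[OF intD intdG])
    fix \<omega> show "PP (h + d) \<omega> - PP h \<omega> \<le> d * GG (h + d) \<omega>" using tang[of "-d" "h + d" \<omega>] by simp
  qed
  also have "\<dots> = d * mm (h + d)" unfolding mm_def by simp
  finally show ?thesis .
qed

lemma pp_lo: "d * mm (h - d) \<le> pp h - pp (h - d)"
proof -
  have "d * mm (h - d) = (\<integral>\<omega>. d * GG (h - d) \<omega> \<partial>M)" unfolding mm_def by simp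
  also have "\<dots> \<le> (\<integral>\<omega>. PP h \<omega> - PP (h - d) \<omega> \<partial>M)"
    by (rule integral_mono[OF intdG intD]) (use tang[of d "h - d"] in simp)
  also have "\<dots> = pp h - pp (h - d)"
    unfolding pp_def by (rule Bochner_Integration.integral_diff[OF intPP intPP])
  finally show ?thesis .
qed


lemma var_bound_h:
  assumes d: "0 < d"
    and V1: "(\<integral>\<omega>. (PP (h + d) \<omega> - pp (h + d))\<^sup>2 \<partial>M) \<le> V"
    and V0: "(\<integral>\<omega>. (PP h \<omega> - pp h)\<^sup>2 \<partial>M) \<le> V"
    and Vm: "(\<integral>\<omega>. (PP (h - d) \<omega> - pp (h - d))\<^sup>2 \<partial>M) \<le> V"
  shows "(\<integral>\<omega>. (GG h \<omega> - mm h)\<^sup>2 \<partial>M) \<le> 16 * V / d\<^sup>2 + 4 * (mm (h + d) - mm (h - d))"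
proof -
  interpret P: prob_space M by (rule probM)
  define A1 where "A1 \<omega> = (PP (h + d) \<omega> - pp (h + d))\<^sup>2" for \<omega>
  define A0 where "A0 \<omega> = (PP h \<omega> - pp h)\<^sup>2" for \<omega>
  define Am where "Am \<omega> = (PP (h - d) \<omega> - pp (h - d))\<^sup>2" for \<omega>
  define c where "c = 4 / d\<^sup>2"
  define K where "K = 4 * ((mm (h + d) - mm h) + (mm h - mm (h - d)))"
  have Dp: "0 \<le> mm (h + d) - mm h" "mm (h + d) - mm h \<le> 2"
    using mm_mono[of h "h + d"] d mm_le[of h] mm_le[of "h + d"] by (auto simp: abs_le_iff)
  have Dm: "0 \<le> mm h - mm (h - d)" "mm h - mm (h - d) \<le> 2"
    using mm_mono[of "h - d" h] d mm_le[of h] mm_le[of "h - d"] by (auto simp: abs_le_iff)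
  have pw: "(GG h \<omega> - mm h)\<^sup>2 \<le> c * A1 \<omega> + (2 * c) * A0 \<omega> + c * Am \<omega> + K" for \<omega>
  proof -
    have up: "GG h \<omega> - mm h \<le> ((PP (h + d) \<omega> - pp (h + d)) - (PP h \<omega> - pp h)) / d + (mm (h + d) - mm h)"
    proof -
      have "d * (GG h \<omega> - mm h) \<le> d * (((PP (h + d) \<omega> - pp (h + d)) - (PP h \<omega> - pp h)) / d + (mm (h + d) - mm h))"
        using tang[of d h \<omega>] pp_up[of h d] d by (simp add: algebra_simps add_divide_distrib diff_divide_distrib)
      thus ?thesis using d by simp
    qed
    have lo: "((PP h \<omega> - pp h) - (PP (h - d) \<omega> - pp (h - d))) / d - (mm h - mm (h - d)) \<le> GG h \<omega> - mm h"
    proof -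
      have "d * (((PP h \<omega> - pp h) - (PP (h - d) \<omega> - pp (h - d))) / d - (mm h - mm (h - d))) \<le> d * (GG h \<omega> - mm h)"
        using tang[of "-d" h \<omega>] pp_lo[of d h] d by (simp add: algebra_simps add_divide_distrib diff_divide_distrib)
      thus ?thesis using d by simp
    qed
    have "(GG h \<omega> - mm h)\<^sup>2 \<le> 4 * (A1 \<omega> + 2 * A0 \<omega> + Am \<omega>) / d\<^sup>2 + 4 * ((mm (h + d) - mm h) + (mm h - mm (h - d)))"
      unfolding A1_def A0_def Am_def by (rule key_real[OF d up lo Dp Dm])
    moreover have "4 * (A1 \<omega> + 2 * A0 \<omega> + Am \<omega>) / d\<^sup>2 = c * A1 \<omega> + (2 * c) * A0 \<omega> + c * Am \<omega>"
      unfolding c_def by (simp add: divide_inverse algebra_simps)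
    ultimately show ?thesis unfolding K_def by linarith
  qed
  have iA1: "integrable M A1" unfolding A1_def by (rule intX2)
  have iA0: "integrable M A0" unfolding A0_def by (rule intX2)
  have iAm: "integrable M Am" unfolding Am_def by (rule intX2)
  have iF: "integrable M (\<lambda>\<omega>. c * A1 \<omega> + (2 * c) * A0 \<omega> + c * Am \<omega> + K)"
    using iA1 iA0 iAm intC by (intro Bochner_Integration.integrable_add integrable_mult_right) auto
  have iY: "integrable M (\<lambda>\<omega>. (GG h \<omega> - mm h)\<^sup>2)"
    using sqi_add[OF sqi_bound[OF sqi_const[OF finM, of 1] measGG] sqi_const[OF finM, of "- mm h"]] GG_le
    by (simp add: sqi_def)
  have "(\<integral>\<omega>. (GG h \<omega> - mm h)\<^sup>2 \<partial>M) \<le> (\<integral>\<omega>. c * A1 \<omega> + (2 * c) * A0 \<omega> + c * Am \<omega> + K \<partial>M)"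
    by (rule integral_mono[OF iY iF pw])
  also have "\<dots> = c * (\<integral>\<omega>. A1 \<omega> \<partial>M) + (2 * c) * (\<integral>\<omega>. A0 \<omega> \<partial>M) + c * (\<integral>\<omega>. Am \<omega> \<partial>M) + K"
    using iA1 iA0 iAm intC P.prob_space by (simp del: One_nat_def)
  also have "\<dots> \<le> c * V + (2 * c) * V + c * V + K"
  proof -
    have c0: "0 \<le> c" by (simp add: c_def)
    have "c * (\<integral>\<omega>. A1 \<omega> \<partial>M) \<le> c * V" using mult_left_mono[OF V1 c0] unfolding A1_def .
    moreover have "c * (\<integral>\<omega>. A0 \<omega> \<partial>M) \<le> c * V" using mult_left_mono[OF V0 c0] unfolding A0_def .
    moreover have "c * (\<integral>\<omega>. Am \<omega> \<partial>M) \<le> c * V" using mult_left_mono[OF Vm c0] unfolding Am_def .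
    moreover have "(2 * c) * (\<integral>\<omega>. A0 \<omega> \<partial>M) = 2 * (c * (\<integral>\<omega>. A0 \<omega> \<partial>M))" "(2 * c) * V = 2 * (c * V)" by simp_all
    ultimately show ?thesis by linarith
  qed
  also have "\<dots> = 16 * V / d\<^sup>2 + 4 * (mm (h + d) - mm (h - d))"
    by (simp add: c_def K_def field_simps)
  finally show ?thesis .
qed

end



lemma mono_int: "mono (m :: real \<Rightarrow> real) \<Longrightarrow> m integrable_on {x..y}"
  by (rule integrable_on_mono_on) (auto simp: mono_on_def mono_def)

lemma int_small:
  fixes m :: "real \<Rightarrow> real"
  assumes mm: "mono m" and mb: "\<And>x. \<bar>m x\<bar> \<le> 1" and xy: "x \<le> y"
  shows "\<bar>integral {x..y} m\<bar> \<le> y - x"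
proof -
  have "integral {x..y} m \<le> integral {x..y} (\<lambda>_. 1)"
    by (rule integral_le[OF mono_int[OF mm]]) (auto intro: order.trans[OF abs_ge_self mb])
  moreover have "integral {x..y} (\<lambda>_. -1) \<le> integral {x..y} m"
  proof (rule integral_le[OF _ mono_int[OF mm]])
    fix h show "-1 \<le> m h" using mb[of h] by (simp add: abs_le_iff)
  qed auto
  ultimately show ?thesis using xy by (simp add: abs_le_iff)
qed

lemma shift_bound:
  fixes m :: "real \<Rightarrow> real"
  assumes mm: "mono m" and mb: "\<And>x. \<bar>m x\<bar> \<le> 1" and d: "0 < d" and ab: "a \<le> b"
  shows "integral {a..b} (\<lambda>h. m (h + d)) - integral {a..b} (\<lambda>h. m (h - d)) \<le> 4 * d"
proof -
  have e1: "integral {a..b} (\<lambda>h. m (h + d)) = integral {a+d..b+d} m"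
    using integral_shift_Icc_real[of a b m d] by (simp add: o_def add.commute)
  have e2: "integral {a..b} (\<lambda>h. m (h - d)) = integral {a-d..b-d} m"
    using integral_shift_Icc_real[of a b m "-d"] by (simp add: o_def add.commute)
  have I: "m integrable_on {a-d..b+d}" by (rule mono_int[OF mm])
  have c1: "integral {a-d..a+d} m + integral {a+d..b+d} m = integral {a-d..b+d} m"
    by (rule Henstock_Kurzweil_Integration.integral_combine[OF _ _ I]) (use d ab in auto)
  have c2: "integral {a-d..b-d} m + integral {b-d..b+d} m = integral {a-d..b+d} m"
    by (rule Henstock_Kurzweil_Integration.integral_combine[OF _ _ I]) (use d ab in auto)
  have s1: "\<bar>integral {a-d..a+d} m\<bar> \<le> 2 * d" using int_small[OF mm mb, of "a-d" "a+d"] d by simp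
  have s2: "\<bar>integral {b-d..b+d} m\<bar> \<le> 2 * d" using int_small[OF mm mb, of "b-d" "b+d"] d by simp
  show ?thesis unfolding e1 e2 using c1 c2 s1 s2 by (simp add: abs_le_iff)
qed

lemma h_int_bound:
  fixes m f :: "real \<Rightarrow> real"
  assumes mm: "mono m" and mb: "\<And>x. \<bar>m x\<bar> \<le> 1" and d: "0 < d" and ab: "a \<le> b" "b - a \<le> 1"
    and C0: "0 \<le> C0" and fb: "\<And>h. h \<in> {a..b} \<Longrightarrow> f h \<le> C0 + 4 * (m (h + d) - m (h - d))"
  shows "integral {a..b} f \<le> C0 + 16 * d"
proof (cases "f integrable_on {a..b}")
  case False
  thus ?thesis using C0 d by (simp add: not_integrable_integral)
next
  case True
  have mono_sh: "mono (\<lambda>h. m (h + c))" for c using mm by (auto simp: mono_def)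
  have i1: "(\<lambda>h. m (h + d)) integrable_on {a..b}" by (rule mono_int[OF mono_sh])
  have i2: "(\<lambda>h. m (h - d)) integrable_on {a..b}" using mono_int[OF mono_sh[of "-d"]] by simp
  have iC: "(\<lambda>h. C0) integrable_on {a..b}" by (rule Henstock_Kurzweil_Integration.integrable_const_ivl)
  have i3: "(\<lambda>h. m (h + d) - m (h - d)) integrable_on {a..b}" by (rule integrable_diff[OF i1 i2])
  have i4: "(\<lambda>h. 4 * (m (h + d) - m (h - d))) integrable_on {a..b}"
    using integrable_on_cmult_left[OF i3, of 4] by simp
  have ig: "(\<lambda>h. C0 + 4 * (m (h + d) - m (h - d))) integrable_on {a..b}"
    by (rule integrable_add[OF iC i4])
  have "integral {a..b} f \<le> integral {a..b} (\<lambda>h. C0 + 4 * (m (h + d) - m (h - d)))"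
    by (rule integral_le[OF True ig fb])
  also have "\<dots> = integral {a..b} (\<lambda>h. C0) + integral {a..b} (\<lambda>h. 4 * (m (h + d) - m (h - d)))"
    by (rule integral_add[OF iC i4])
  also have "integral {a..b} (\<lambda>h. 4 * (m (h + d) - m (h - d))) = 4 * integral {a..b} (\<lambda>h. m (h + d) - m (h - d))"
    by (rule integral_mult_right)
  also have "integral {a..b} (\<lambda>h. m (h + d) - m (h - d)) = integral {a..b} (\<lambda>h. m (h + d)) - integral {a..b} (\<lambda>h. m (h - d))"
    by (rule integral_diff[OF i1 i2])
  also have "integral {a..b} (\<lambda>h. C0) = (b - a) * C0"
    using ab by (simp add: content_real)
  also have "(b - a) * C0 + 4 * (integral {a..b} (\<lambda>h. m (h + d)) - integral {a..b} (\<lambda>h. m (h - d))) \<le> 1 * C0 + 4 * (4 * d)"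
  proof (rule add_mono)
    show "(b - a) * C0 \<le> 1 * C0" using ab C0 by (intro mult_right_mono) auto
    show "4 * (integral {a..b} (\<lambda>h. m (h + d)) - integral {a..b} (\<lambda>h. m (h - d))) \<le> 4 * (4 * d)"
      using shift_bound[OF mm mb d ab(1)] by simp
  qed
  finally show ?thesis by simp
qed



lemma lim_d: "((\<lambda>n. 2 / real n powr (1/3)) \<longlongrightarrow> 0) sequentially"
  by real_asymp

lemma final_arith:
  fixes n :: nat and CP :: real
  assumes n: "n \<ge> 1" and CP: "0 < CP"
  shows "16 * (CP / real n) / (2 / real n powr (1/3))\<^sup>2 + 16 * (2 / real n powr (1/3)) \<le> (5 * CP + 40) / real n powr (1/3)"
proof -
  define t where "t = real n powr (1/3)"
  have t: "0 < t" using n by (simp add: t_def)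
  have "t ^ 3 = real n" unfolding t_def using n
    by (simp add: powr_realpow[symmetric] powr_powr)
  hence nt: "real n = t ^ 3" by simp
  have "16 * (CP / real n) / (2 / t)\<^sup>2 + 16 * (2 / t) = (4 * CP + 32) / t"
    unfolding nt using t by (simp add: field_simps power2_eq_square power3_eq_cube)
  also have "\<dots> \<le> (5 * CP + 40) / t" using t CP by (intro divide_right_mono) auto
  finally show ?thesis unfolding t_def .
qed

theorem lemma3p2:
  fixes \<theta> h1 \<alpha> hlo hhi C CP :: real
    and \<mu> :: "nat \<Rightarrow> nat set \<Rightarrow> real measure"
  assumes theta: "1/2 < \<theta>" "\<theta> \<le> 7/8"
    and h1: "0 \<le> h1" "h1 \<le> 1"
    and alpha: "0 \<le> \<alpha>" "\<alpha> \<le> 1"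
    and hint: "0 < hlo" "hlo \<le> hhi" "hhi < 1"
    and mu_prob: "\<And>n X. X \<in> Pow {1..n} \<Longrightarrow> prob_space (\<mu> n X)"
    and mu_sets: "\<And>n X. X \<in> Pow {1..n} \<Longrightarrow> sets (\<mu> n X) = sets borel"
    and mu_nonneg: "\<And>n X. X \<in> Pow {1..n} \<Longrightarrow> AE x in \<mu> n X. 0 \<le> x"
    and mu_L2: "\<And>n X. X \<in> Pow {1..n} \<Longrightarrow> integrable (\<mu> n X) (\<lambda>x. x\<^sup>2)"
    and var_bound: "\<And>n. (\<Sum>X\<in>Pow {1..n}. law_var (\<mu> n X)) \<le> C * real n"
    and CP_pos: "0 < CP"
    and conc: "\<And>n h0 h1' \<alpha>'. 0 < h0 \<Longrightarrow> h0 < 1 \<Longrightarrow> 0 \<le> h1' \<Longrightarrow> h1' \<le> 1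
        \<Longrightarrow> 0 \<le> \<alpha>' \<Longrightarrow> \<alpha>' \<le> 1 \<Longrightarrow>
        (\<integral>\<omega>. (pressure n (fst \<omega>) (snd \<omega>) h0 h1'
               - (\<integral>\<omega>'. pressure n (fst \<omega>') (snd \<omega>') h0 h1' \<partial>disorder_law \<mu> \<theta> n \<alpha>'))\<^sup>2
           \<partial>disorder_law \<mu> \<theta> n \<alpha>') \<le> CP / real n"
  shows "\<forall>\<^sub>F n in sequentially.
    integral {hlo..hhi} (\<lambda>h0.
      (\<integral>\<omega>. (gibbs n (fst \<omega>) (snd \<omega>) h0 h1 (Q1 n)
             - (\<integral>\<omega>'. gibbs n (fst \<omega>') (snd \<omega>') h0 h1 (Q1 n) \<partial>disorder_law \<mu> \<theta> n \<alpha>))\<^sup>2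
         \<partial>disorder_law \<mu> \<theta> n \<alpha>))
    \<le> (5 * CP + 40) / real n powr (1/3)"
proof -
  define r where "r n = \<alpha> * real n powr (\<theta> - 1)" for n :: nat
  define d where "d n = 2 / real n powr (1/3)" for n :: nat
  have ev1: "\<forall>\<^sub>F n in sequentially. d n < min hlo (1 - hhi)"
    using order_tendstoD(2)[OF lim_d, of "min hlo (1 - hhi)"] hint unfolding d_def by simp
  have ev2: "\<forall>\<^sub>F n in sequentially. (1::nat) \<le> n" by (rule eventually_ge_at_top)
  show ?thesis using ev1 ev2
  proof eventually_elim
    case (elim n)
    have n1: "1 \<le> n" using elim by simp
    have dpos: "0 < d n" using n1 by (simp add: d_def)
    have dlo: "d n < hlo" and dhi: "d n < 1 - hhi" using elim by auto
    interpret D2: dis2 "\<mu> n" n "r n" h1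
      by (rule dis2.intro[OF dis.intro dis2_axioms.intro]) (simp_all only: mu_prob mu_sets mu_L2 n1 h1)
    have DL: "disorder_law \<mu> \<theta> n \<alpha> = D2.M" unfolding disorder_law_def r_def ..
    have V: "(\<integral>\<omega>. (D2.PP k \<omega> - D2.pp k)\<^sup>2 \<partial>D2.M) \<le> CP / real n" if "0 < k" "k < 1" for k
      using conc[OF that h1 alpha, of n] unfolding DL D2.PP_def D2.pp_def .
    have mono: "mono D2.mm" by (auto simp: mono_def intro: D2.mm_mono)
    have "integral {hlo..hhi} (\<lambda>h0. \<integral>\<omega>. (D2.GG h0 \<omega> - D2.mm h0)\<^sup>2 \<partial>D2.M)
        \<le> 16 * (CP / real n) / (d n)\<^sup>2 + 16 * d n"
    proof (rule h_int_bound[OF mono D2.mm_le dpos])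
      show "hlo \<le> hhi" "hhi - hlo \<le> 1" using hint by auto
      show "0 \<le> 16 * (CP / real n) / (d n)\<^sup>2" using CP_pos by simp
      fix h assume h: "h \<in> {hlo..hhi}"
      show "(\<integral>\<omega>. (D2.GG h \<omega> - D2.mm h)\<^sup>2 \<partial>D2.M) \<le> 16 * (CP / real n) / (d n)\<^sup>2 + 4 * (D2.mm (h + d n) - D2.mm (h - d n))"
        by (rule D2.var_bound_h[OF dpos V V V]) (use h hint dlo dhi dpos in auto)
    qed
    also have "\<dots> \<le> (5 * CP + 40) / real n powr (1/3)"
      unfolding d_def by (rule final_arith[OF n1 CP_pos])
    finally show ?case unfolding DL D2.GG_def D2.mm_def .
  qed
qed

end
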